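(* Let $\mathsf{p}_1,\dots,\mathsf{p}_N\in\mathbb{C}^{n_p}$ and $y_1,\dots,y_N\in\mathbb{C}^{n_o\times n_f}$ be samples such that the collection of pairs $(\mathsf{p}_\ell,y_\ell)$ is closed under conjugation (for each $\ell$ the pair $(\overline{\mathsf{p}_\ell},\overline{y_\ell})$ also occurs among the samples). Let $\mathcal{P}=\{\mathsf{p}_1,\dots,\mathsf{p}_N\}$, $\mu=\frac1N\sum_{\ell=1}^N\delta_{\mathsf{p}_\ell}$, and let $\hat\alpha_i,\hat\beta_j,\hat\gamma_k:\mathcal{P}\to\mathbb{C}$ ($i=1,\dots,q_A$, $j=1,\dots,q_B$, $k=1,\dots,q_C$) be functions with $f(\overline{\mathsf{p}})=\overline{f(\mathsf{p})}$ for each such $f$, satisfying \[ \int_{\mathcal{P}}\left(\frac{\sum_{j}|\hat\beta_j(\mathsf{p})|\,\sum_{k}|\hat\gamma_k(\mathsf{p})|}{\sum_{i}|\hat\alpha_i(\mathsf{p})|}\right)^{2}d\mu(\mathsf{p})<\infty . \] For $(\hat A_i,\hat B_j,\hat C_k)\in(\mathbb{R}^{r\times r})^{q_A}\times(\mathbb{R}^{r\times n_f})^{q_B}\times(\mathbb{R}^{n_o\times r})^{q_C}$ let $\hat{\mathcal{A}}(\mathsf{p})=\sum_i\hat\alpha_i(\mathsf{p})\hat A_i$, $\hat{\mathcal{B}}(\mathsf{p})=\sum_j\hat\beta_j(\mathsf{p})\hat B_j$, $\hat{\mathcal{C}}(\mathsf{p})=\sum_k\hat\gamma_k(\mathsf{p})\hat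 C_k$, and suppose the tuple lies in the set $\mathcal{R}$ of tuples with $\operatorname*{ess\,sup}_{\mathsf{p}\in\mathcal{P}}\|\hat\alpha_i(\mathsf{p})\hat{\mathcal{A}}(\mathsf{p})^{-1}\|_F<\infty$ for all $i$ (essential supremum w.r.t. $\mu$). Define $\hat x(\mathsf{p})=\hat{\mathcal{A}}(\mathsf{p})^{-1}\hat{\mathcal{B}}(\mathsf{p})$, $\hat y(\mathsf{p})=\hat{\mathcal{C}}(\mathsf{p})\hat x(\mathsf{p})$, $\hat x_d(\mathsf{p})=\hat{\mathcal{A}}(\mathsf{p})^{-*}\hat{\mathcal{C}}(\mathsf{p})^*$ and \[ \mathcal{J}_{\mathrm{MSE}}=\frac1N\sum_{\ell=1}^N\|y_\ell-\hat y(\mathsf{p}_\ell)\|_F^2 . \] Then the gradients of $\mathcal{J}_{\mathrm{MSE}}$ with respect to the reduced matrices are \begin{align*} \nabla_{\hat A_i}\mathcal{J}_{\mathrm{MSE}}&=\frac2N\sum_{\ell=1}^N\hat\alpha_i(\overline{\mathsf{p}_\ell})\,\hat x_d(\mathsf{p}_\ell)\,[y_\ell-\hat y(\mathsf{p}_\ell)]\,\hat x(\mathsf{p}_\ell)^*,&i=1,\dots,q_A,\\ \nabla_{\hat B_j}\mathcal{J}_{\mathrm{MSE}}&=\frac2N\sum_{\ell=1}^N\hat\beta_j(\overline{\mathsf{p}_\ell})\,\hat x_d(\mathsf{p}_\ell)\,[\hat y(\mathsf{p}_\ell)-y_\ell],&j=1,\dots,q_B,\\ \nabla_{\hat C_k}\mathcal{J}_{\mathrm{MSE}}&=\frac2N\sum_{\ell=1}^N\hat\gamma_k(\overline{\mathsf{p}_\ell})\,[\hat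 y(\mathsf{p}_\ell)-y_\ell]\,\hat x(\mathsf{p}_\ell)^*,&k=1,\dots,q_C. \end{align*}
   Context: $\delta_x$ is the Dirac measure at $x$; $\|\cdot\|_F$ the Frobenius norm; $(\cdot)^*$ the conjugate transpose and $M^{-*}=(M^{-1})^*$. Gradients are taken with respect to the real Frobenius inner product $\langle X,Y\rangle=\operatorname{trace}(X^{\mathrm T}Y)$ on real matrices, i.e. $\nabla f(x)$ is the unique element with $f(x+h)=f(x)+\langle\nabla f(x),h\rangle+o(\|h\|)$. *)

theory Defs
  imports "HOL-Analysis.Analysis" "HOL-Probability.Probability"
begin

text \<open>Complex matrices are 'complex ^ 'cols ^ 'rows'; real matrices 'real ^ 'cols ^ 'rows'.\<close>

definition cmat :: "real^'n^'m \<Rightarrow> complex^'n^'m" where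
  "cmat M = (\<chi> a b. complex_of_real (M$a$b))"

definition remat :: "complex^'n^'m \<Rightarrow> real^'n^'m" where
  "remat M = (\<chi> a b. Re (M$a$b))"

definition smat :: "complex \<Rightarrow> complex^'n^'m \<Rightarrow> complex^'n^'m" where
  "smat c M = (\<chi> a b. c * M$a$b)"

text \<open>entrywise conjugate of a matrix / vector, and the conjugate transpose\<close>
definition mconj :: "complex^'n^'m \<Rightarrow> complex^'n^'m" where
  "mconj M = (\<chi> a b. cnj (M$a$b))"

definition vconj :: "complex^'n \<Rightarrow> complex^'n" where
  "vconj v = (\<chi> a. cnj (v$a))"

definition cadj :: "complex^'n^'m \<Rightarrow> complex^'m^'n" where
  "cadj M = (\<chi> a b. cnj (M$b$a))"

definition frob :: "complex^'n^'m \<Rightarrow> real" where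
  "frob M = sqrt (\<Sum>a\<in>UNIV. \<Sum>b\<in>UNIV. (cmod (M$a$b))^2)"

text \<open>parametric matrix  p \<mapsto> sum_{i<q} f_i(p) M_i\<close>
definition pmat :: "nat \<Rightarrow> (nat \<Rightarrow> 'p \<Rightarrow> complex) \<Rightarrow> (nat \<Rightarrow> real^'n^'m) \<Rightarrow> 'p \<Rightarrow> complex^'n^'m" where
  "pmat q f M p = (\<Sum>i<q. smat (f i p) (cmat (M i)))"

definition xhat :: "nat \<Rightarrow> (nat \<Rightarrow> 'p \<Rightarrow> complex) \<Rightarrow> (nat \<Rightarrow> real^'r^'r)
    \<Rightarrow> nat \<Rightarrow> (nat \<Rightarrow> 'p \<Rightarrow> complex) \<Rightarrow> (nat \<Rightarrow> real^'f^'r) \<Rightarrow> 'p \<Rightarrow> complex^'f^'r" where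
  "xhat qA \<alpha> A qB \<beta> B p = matrix_inv (pmat qA \<alpha> A p) ** pmat qB \<beta> B p"

definition yhat :: "nat \<Rightarrow> (nat \<Rightarrow> 'p \<Rightarrow> complex) \<Rightarrow> (nat \<Rightarrow> real^'r^'r)
    \<Rightarrow> nat \<Rightarrow> (nat \<Rightarrow> 'p \<Rightarrow> complex) \<Rightarrow> (nat \<Rightarrow> real^'f^'r)
    \<Rightarrow> nat \<Rightarrow> (nat \<Rightarrow> 'p \<Rightarrow> complex) \<Rightarrow> (nat \<Rightarrow> real^'r^'o) \<Rightarrow> 'p \<Rightarrow> complex^'f^'o" where
  "yhat qA \<alpha> A qB \<beta> B qC \<gamma> C p = pmat qC \<gamma> C p ** xhat qA \<alpha> A qB \<beta> B p"

text \<open>dual state  A(p)^{-*} C(p)^*\<close>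
definition xdual :: "nat \<Rightarrow> (nat \<Rightarrow> 'p \<Rightarrow> complex) \<Rightarrow> (nat \<Rightarrow> real^'r^'r)
    \<Rightarrow> nat \<Rightarrow> (nat \<Rightarrow> 'p \<Rightarrow> complex) \<Rightarrow> (nat \<Rightarrow> real^'r^'o) \<Rightarrow> 'p \<Rightarrow> complex^'o^'r" where
  "xdual qA \<alpha> A qC \<gamma> C p = cadj (matrix_inv (pmat qA \<alpha> A p)) ** cadj (pmat qC \<gamma> C p)"

text \<open>mean squared error over the samples P 0..P (N-1), Y 0..Y (N-1)\<close>
definition Jmse :: "nat \<Rightarrow> (nat \<Rightarrow> 'p) \<Rightarrow> (nat \<Rightarrow> complex^'f^'o)
    \<Rightarrow> nat \<Rightarrow> (nat \<Rightarrow> 'p \<Rightarrow> complex) \<Rightarrow> (nat \<Rightarrow> real^'r^'r)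
    \<Rightarrow> nat \<Rightarrow> (nat \<Rightarrow> 'p \<Rightarrow> complex) \<Rightarrow> (nat \<Rightarrow> real^'f^'r)
    \<Rightarrow> nat \<Rightarrow> (nat \<Rightarrow> 'p \<Rightarrow> complex) \<Rightarrow> (nat \<Rightarrow> real^'r^'o) \<Rightarrow> real" where
  "Jmse N P Y qA \<alpha> A qB \<beta> B qC \<gamma> C =
     (1 / real N) * (\<Sum>l<N. (frob (Y l - yhat qA \<alpha> A qB \<beta> B qC \<gamma> C (P l)))^2)"

text \<open>empirical measure  mu = (1/N) sum_l delta_{P l}\<close>
definition empmeas :: "nat \<Rightarrow> (nat \<Rightarrow> 'p) \<Rightarrow> 'p measure" where
  "empmeas N P = measure_pmf (pmf_of_multiset (mset (map P [0..<N])))"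

text \<open>the set R of admissible reduced tuples (A is invertible mu-a.e. and the
  essential suprema of the Frobenius norms of alpha_i(p) A(p)^{-1} are finite)\<close>
definition inR :: "'p measure \<Rightarrow> nat \<Rightarrow> (nat \<Rightarrow> 'p \<Rightarrow> complex) \<Rightarrow> (nat \<Rightarrow> real^'r^'r) \<Rightarrow> bool" where
  "inR \<mu> qA \<alpha> A \<longleftrightarrow> (AE p in \<mu>. invertible (pmat qA \<alpha> A p)) \<and>
     (\<forall>i<qA. esssup \<mu> (\<lambda>p. ereal (frob (smat (\<alpha> i p) (matrix_inv (pmat qA \<alpha> A p))))) < \<infinity>)"

end

theory Submission
  imports Defs
begin

lemma minv: "invertible (A::'a::semiring_1^'n^'m) \<Longrightarrow> A ** matrix_inv A = mat 1 \<and> matrix_inv A ** A = mat 1"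
  unfolding matrix_inv_def invertible_def by (rule someI_ex)

lemma inner_cx: "inner (x::complex) y = Re (x * cnj y)"
  by (simp add: inner_complex_def)

lemma frob_sq: "(frob M)^2 = inner M M"
  unfolding frob_def inner_vec_def
  by (simp add: power2_norm_eq_inner sum_nonneg)

lemma lin_left: "linear (\<lambda>W::complex^'n^'m. K ** W)"
  by (rule linearI) (simp_all add: vec_eq_iff matrix_matrix_mult_def scaleR_sum_right distrib_left distrib_right sum.distrib)

lemma lin_right: "linear (\<lambda>W::complex^'n^'m. W ** K)"
  by (rule linearI) (simp_all add: vec_eq_iff matrix_matrix_mult_def scaleR_sum_right distrib_left distrib_right sum.distrib)

lemma bl_left: "bounded_linear (\<lambda>W::complex^'n^'m. K ** W)"
  using lin_left linear_conv_bounded_linear by blast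
lemma bl_right: "bounded_linear (\<lambda>W::complex^'n^'m. W ** K)"
  using lin_right linear_conv_bounded_linear by blast

lemma mult_bound: "\<exists>K>0. \<forall>(X::complex^'n^'m) (Y::complex^'k^'n). norm (X ** Y) \<le> K * norm X * norm Y"
proof -
  have "bilinear (\<lambda>(X::complex^'n^'m) (Y::complex^'k^'n). X ** Y)"
    unfolding bilinear_def using lin_left lin_right by blast
  from bilinear_bounded_pos[OF this] show ?thesis by blast
qed

lemma isCont_det: "isCont (det :: complex^'n^'n \<Rightarrow> complex) Z"
  unfolding det_def by (intro continuous_intros)

lemma bl_smat_cmat: "bounded_linear (\<lambda>H::real^'n^'m. smat a (cmat H))"
  apply (rule linear_conv_bounded_linear[THEN iffD1])
  apply (rule linearI)
   apply (simp_all add: vec_eq_iff smat_def cmat_def distrib_left)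
  by (simp add: scaleR_conv_of_real)

lemma mm_sub_l: "(A::'a::comm_ring_1^'n^'m) ** (B - C) = A ** B - A ** C"
  by (simp add: vec_eq_iff matrix_matrix_mult_def algebra_simps sum_subtractf)
lemma mm_sub_r: "((A::'a::comm_ring_1^'n^'m) - B) ** C = A ** C - B ** C"
  by (simp add: vec_eq_iff matrix_matrix_mult_def algebra_simps sum_subtractf)
lemma mm_add_r: "((A::'a::comm_ring_1^'n^'m) + B) ** C = A ** C + B ** C"
  by (simp add: vec_eq_iff matrix_matrix_mult_def algebra_simps sum.distrib)
lemma mm_neg_l: "(- (A::'a::comm_ring_1^'n^'m)) ** C = - (A ** C)"
  by (simp add: vec_eq_iff matrix_matrix_mult_def sum_negf)
lemma mm_neg_r: "(A::'a::comm_ring_1^'n^'m) ** (- C) = - (A ** C)"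
  by (simp add: vec_eq_iff matrix_matrix_mult_def sum_negf)

lemma inv_near:
  fixes Z0 :: "complex^'n^'n"
  assumes "invertible Z0"
  shows "\<exists>d>0. \<forall>Z. norm (Z - Z0) < d \<longrightarrow> invertible Z"
proof -
  have nz: "det Z0 \<noteq> 0" using assms invertible_det_nz by blast
  have "det \<midarrow>Z0\<rightarrow> det Z0" using isCont_det[of Z0] unfolding isCont_def .
  then obtain s where s: "s > 0" "\<And>x. x \<noteq> Z0 \<and> norm (x - Z0) < s \<Longrightarrow> norm (det x - det Z0) < norm (det Z0)"
    unfolding LIM_eq using nz by (meson zero_less_norm_iff)
  show ?thesis
  proof (intro exI[of _ s] conjI allI impI)
    fix Z :: "complex^'n^'n" assume "norm (Z - Z0) < s"
    then have "det Z \<noteq> 0"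
    proof (cases "Z = Z0")
      case False
      then have "norm (det Z - det Z0) < norm (det Z0)" using s \<open>norm (Z - Z0) < s\<close> by blast
      then show ?thesis by auto
    qed (use nz in auto)
    then show "invertible Z" using invertible_det_nz by blast
  qed (use s in auto)
qed

lemma MI:
  fixes Z0 :: "complex^'n^'n"
  assumes inv: "invertible Z0"
  shows "(matrix_inv has_derivative (\<lambda>H. - (matrix_inv Z0 ** H ** matrix_inv Z0))) (at Z0)"
proof -
  obtain K where K: "K > 0" "\<And>(X::complex^'n^'n) (Y::complex^'n^'n). norm (X ** Y) \<le> K * norm X * norm Y"
    using mult_bound by blast
  have KK: "norm (X ** Y) \<le> K * u * v" if "norm X \<le> u" "norm Y \<le> v" for X Y :: "complex^'n^'n" and u v
  proof -
    have "norm (X ** Y) \<le> K * norm X * norm Y" by (rule K(2))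
    also have "\<dots> \<le> K * u * v"
      using that K(1) order_trans[OF norm_ge_zero that(1)]
      by (intro mult_mono mult_left_mono) auto
    finally show ?thesis .
  qed
  define Zi where "Zi = matrix_inv Z0"
  define b where "b = norm Zi + 1"
  have b: "b > 0" "norm Zi \<le> b" unfolding b_def using norm_ge_zero[of Zi] by linarith+
  have Zi: "Z0 ** Zi = mat 1" "Zi ** Z0 = mat 1" using minv[OF inv] unfolding Zi_def by auto
  obtain d0 where d0: "d0 > 0" "\<And>Z. norm (Z - Z0) < d0 \<Longrightarrow> invertible Z"
    using inv_near[OF inv] by blast
  have bl: "bounded_linear (\<lambda>H. - (Zi ** H ** Zi))"
    by (intro bounded_linear_minus bounded_linear_compose[OF bl_right bl_left])
  show ?thesis
    unfolding has_derivative_at_alt Zi_def[symmetric]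
  proof (intro conjI bl allI impI)
    fix e :: real assume e: "e > 0"
    define d where "d = min d0 (min (1/(2*K*K*b)) (e/(2*K^4*b^3)))"
    have dpos: "d > 0" unfolding d_def using d0 K b e by auto
    show "\<exists>d>0. \<forall>Z. norm (Z - Z0) < d \<longrightarrow>
           norm (matrix_inv Z - Zi - - (Zi ** (Z - Z0) ** Zi)) \<le> e * norm (Z - Z0)"
    proof (intro exI[of _ d] conjI dpos allI impI)
      fix Z :: "complex^'n^'n" assume Zd: "norm (Z - Z0) < d"
      define H where "H = Z - Z0"
      define W where "W = matrix_inv Z"
      have "invertible Z" using d0 Zd unfolding d_def by auto
      then have WZ: "W ** Z = mat 1" using minv unfolding W_def by blast
      have eqW: "W = Zi - W ** H ** Zi"
      proof -
        have "W ** Z0 = mat 1 - W ** H" unfolding H_def mm_sub_l WZ by simp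
        then have "W ** Z0 ** Zi = Zi - W ** H ** Zi" by (simp add: mm_sub_r)
        moreover have "W ** Z0 ** Zi = W" by (simp add: matrix_mul_assoc[symmetric] Zi)
        ultimately show ?thesis by simp
      qed
      have nH1: "K * K * b * norm H \<le> 1/2"
      proof -
        have "norm H \<le> 1/(2*K*K*b)" using Zd unfolding H_def d_def by auto
        then have "K*K*b * norm H \<le> K*K*b * (1/(2*K*K*b))"
          using K b by (intro mult_left_mono) auto
        also have "\<dots> = 1/2" using K b by (simp add: field_simps)
        finally show ?thesis .
      qed
      have nW: "norm W \<le> 2 * b"
      proof -
        have "norm W \<le> norm Zi + norm (W ** H ** Zi)" using eqW
          by (metis norm_triangle_ineq4)
        also have "norm (W ** H ** Zi) \<le> K * (K * norm W * norm H) * b"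
          by (intro KK b order_refl)
        also have "K * (K * norm W * norm H) * b = (K * K * b * norm H) * norm W" by simp
        also have "\<dots> \<le> 1/2 * norm W" by (intro mult_right_mono nH1) auto
        finally show ?thesis using b by simp
      qed
      have A1: "W - Zi = - (W ** H ** Zi)"
      proof -
        from eqW have "W - Zi = (Zi - W ** H ** Zi) - Zi" by (rule arg_cong[where f="\<lambda>t. t - Zi"])
        then show ?thesis by simp
      qed
      have A2: "Zi - W = W ** H ** Zi"
      proof -
        from eqW have "Zi - W = Zi - (Zi - W ** H ** Zi)" by (rule arg_cong[where f="\<lambda>t. Zi - t"])
        then show ?thesis by simp
      qed
      have R: "matrix_inv Z - Zi - - (Zi ** (Z - Z0) ** Zi) = W ** H ** Zi ** H ** Zi"
      proof -
        have "matrix_inv Z - Zi - - (Zi ** (Z - Z0) ** Zi) = (W - Zi) + Zi ** H ** Zi"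
          unfolding W_def H_def by simp
        also have "\<dots> = Zi ** H ** Zi - W ** H ** Zi" unfolding A1 by simp
        also have "\<dots> = (Zi - W) ** H ** Zi" by (simp add: mm_sub_r)
        also have "\<dots> = W ** H ** Zi ** H ** Zi" unfolding A2 ..
        finally show ?thesis .
      qed
      have "norm (W ** H ** Zi ** H ** Zi) \<le> K * (K * (K * (K * (2*b) * norm H) * b) * norm H) * b"
        by (intro KK nW b order_refl)
      also have "\<dots> = (2 * K^4 * b^3 * norm H) * norm H" by (simp add: power_def)
      also have "\<dots> \<le> e * norm H"
      proof (intro mult_right_mono)
        have "norm H \<le> e/(2*K^4*b^3)" using Zd unfolding H_def d_def by auto
        then have "2*K^4*b^3 * norm H \<le> 2*K^4*b^3 * (e/(2*K^4*b^3))"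
          using K b by (intro mult_left_mono) auto
        also have "\<dots> = e" using K b by (simp add: field_simps)
        finally show "2 * K^4 * b^3 * norm H \<le> e" .
      qed simp
      finally show "norm (matrix_inv Z - Zi - - (Zi ** (Z - Z0) ** Zi)) \<le> e * norm (Z - Z0)"
        unfolding R H_def .
    qed
  qed
qed

lemma cadj_mult: "cadj ((A::complex^'n^'m) ** B) = cadj B ** cadj A"
  by (simp add: vec_eq_iff cadj_def matrix_matrix_mult_def mult.commute)

lemma inner_mat: "inner (E::complex^'k^'m) F = (\<Sum>a\<in>UNIV. \<Sum>b\<in>UNIV. Re (E$a$b * cnj (F$a$b)))"
  by (simp add: inner_vec_def inner_cx)

lemma sum3_swap: "(\<Sum>a\<in>A. \<Sum>b\<in>B. \<Sum>c\<in>C. f a b c) = (\<Sum>c\<in>C. \<Sum>b\<in>B. \<Sum>a\<in>A. f a b c)"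
proof -
  have "(\<Sum>a\<in>A. \<Sum>b\<in>B. \<Sum>c\<in>C. f a b c) = (\<Sum>a\<in>A. \<Sum>c\<in>C. \<Sum>b\<in>B. f a b c)"
    by (rule sum.cong[OF refl], rule sum.swap)
  also have "\<dots> = (\<Sum>c\<in>C. \<Sum>a\<in>A. \<Sum>b\<in>B. f a b c)" by (rule sum.swap)
  also have "\<dots> = (\<Sum>c\<in>C. \<Sum>b\<in>B. \<Sum>a\<in>A. f a b c)" by (rule sum.cong[OF refl], rule sum.swap)
  finally show ?thesis .
qed

lemma inner_mult_l: "inner (E::complex^'k^'m) ((K::complex^'n^'m) ** S) = inner (cadj K ** E) S"
proof -
  have "inner E (K ** S) = (\<Sum>a\<in>UNIV. \<Sum>b\<in>UNIV. \<Sum>c\<in>UNIV. Re (E$a$b * cnj (K$a$c) * cnj (S$c$b)))"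
    unfolding inner_mat matrix_matrix_mult_def
    by (simp add: sum_distrib_left Re_sum mult.assoc)
  also have "\<dots> = (\<Sum>c\<in>UNIV. \<Sum>b\<in>UNIV. \<Sum>a\<in>UNIV. Re (E$a$b * cnj (K$a$c) * cnj (S$c$b)))"
    by (rule sum3_swap)
  also have "\<dots> = inner (cadj K ** E) S"
    unfolding inner_mat matrix_matrix_mult_def cadj_def
    apply (simp only: vec_lambda_beta sum_distrib_right Re_sum)
    apply (intro sum.cong refl arg_cong[where f=Re])
    by (simp only: mult_ac)
  finally show ?thesis .
qed

lemma cadj_cadj[simp]: "cadj (cadj A) = A"
  by (simp add: vec_eq_iff cadj_def)

lemma inner_cadj: "inner (cadj (A::complex^'n^'m)) (cadj B) = inner A B"
proof -
  have "inner (cadj A) (cadj B) = (\<Sum>a\<in>UNIV. \<Sum>b\<in>UNIV. Re (cnj (A$b$a) * cnj (cnj (B$b$a))))"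
    unfolding inner_mat cadj_def by simp
  also have "\<dots> = (\<Sum>b\<in>UNIV. \<Sum>a\<in>UNIV. Re (cnj (A$b$a) * cnj (cnj (B$b$a))))" by (rule sum.swap)
  also have "\<dots> = inner A B" unfolding inner_mat
    by (intro sum.cong refl) simp
  finally show ?thesis .
qed

lemma inner_mult_r: "inner (E::complex^'k^'m) ((S::complex^'n^'m) ** X) = inner (E ** cadj X) S"
proof -
  have "inner E (S ** X) = inner (cadj E) (cadj (S ** X))" by (rule inner_cadj[symmetric])
  also have "\<dots> = inner (cadj E) (cadj X ** cadj S)" by (simp only: cadj_mult)
  also have "\<dots> = inner (X ** cadj E) (cadj S)" by (simp add: inner_mult_l)
  also have "\<dots> = inner (cadj (X ** cadj E)) (cadj (cadj S))" by (rule inner_cadj[symmetric])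
  also have "\<dots> = inner (E ** cadj X) S" by (simp only: cadj_mult cadj_cadj)
  finally show ?thesis .
qed

lemma inner_smat_cmat: "inner (M::complex^'n^'m) (smat a (cmat H)) = inner H (remat (smat (cnj a) M))"
  unfolding inner_mat
  by (simp add: inner_vec_def smat_def cmat_def remat_def) (intro sum.cong refl, simp add: algebra_simps)

lemma pmat_upd:
  assumes "i < q"
  shows "pmat q f (M(i:=X)) p = pmat q f M p + smat (f i p) (cmat X - cmat (M i))"
proof -
  have "pmat q f (M(i:=X)) p - pmat q f M p = (\<Sum>i'<q. if i' = i then smat (f i p) (cmat X - cmat (M i)) else 0)"
    unfolding pmat_def sum_subtractf[symmetric]
    by (intro sum.cong refl) (auto simp: vec_eq_iff smat_def cmat_def algebra_simps)
  also have "\<dots> = smat (f i p) (cmat X - cmat (M i))" using assms by simp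
  finally show ?thesis by (simp add: algebra_simps)
qed

lemma J_deriv:
  fixes e :: "nat \<Rightarrow> 'x::real_normed_vector \<Rightarrow> complex^'f^'o"
  assumes "\<And>l. l < N \<Longrightarrow> ((e l) has_derivative (d l)) (at X0)"
  shows "((\<lambda>X. (1/real N) * (\<Sum>l<N. (frob (e l X))^2)) has_derivative
          (\<lambda>H. (1/real N) * (\<Sum>l<N. 2 * inner (e l X0) (d l H)))) (at X0)"
proof -
  have "((\<lambda>X. (1/real N) * (\<Sum>l<N. inner (e l X) (e l X))) has_derivative
          (\<lambda>H. (1/real N) * (\<Sum>l<N. inner (e l X0) (d l H) + inner (d l H) (e l X0)))) (at X0)"
    by (intro derivative_intros assms) auto
  then show ?thesis
    unfolding frob_sq
  proof (rule has_derivative_eq_rhs)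
    show "(\<lambda>H. (1/real N) * (\<Sum>l<N. inner (e l X0) (d l H) + inner (d l H) (e l X0))) =
          (\<lambda>H. (1/real N) * (\<Sum>l<N. 2 * inner (e l X0) (d l H)))"
      by (intro ext arg_cong[where f="\<lambda>x. (1/real N) * x"] sum.cong refl)
         (simp only: inner_commute[of "d _ _" "e _ X0"] mult_2)
  qed
qed

lemma mconj_mult: "mconj ((A::complex^'n^'m) ** B) = mconj A ** mconj B"
  by (simp add: vec_eq_iff mconj_def matrix_matrix_mult_def)
lemma mconj_mat1: "mconj (mat 1 :: complex^'n^'n) = mat 1"
  by (simp add: vec_eq_iff mconj_def mat_def)
lemma mconj_diff: "mconj (A - B) = mconj A - mconj B"
  by (simp add: vec_eq_iff mconj_def)
lemma mconj_add: "mconj (A + B) = mconj A + mconj B"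
  by (simp add: vec_eq_iff mconj_def)
lemma mconj_smat: "mconj (smat c M) = smat (cnj c) (mconj M)"
  by (simp add: vec_eq_iff mconj_def smat_def)
lemma mconj_cadj: "mconj (cadj M) = cadj (mconj M)"
  by (simp add: vec_eq_iff mconj_def cadj_def)
lemma mconj_cmat: "mconj (cmat M) = cmat M"
  by (simp add: vec_eq_iff mconj_def cmat_def)
lemma mconj_sum: "mconj (sum f A) = (\<Sum>x\<in>A. mconj (f x))"
  by (simp add: vec_eq_iff mconj_def)
lemma mconj_mconj[simp]: "mconj (mconj M) = M"
  by (simp add: vec_eq_iff mconj_def)
lemma vconj_vconj[simp]: "vconj (vconj v) = v"
  by (simp add: vec_eq_iff vconj_def)

lemma mconj_inv:
  fixes Z :: "complex^'n^'n"
  assumes "invertible Z"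
  shows "matrix_inv (mconj Z) = mconj (matrix_inv Z)"
proof -
  have Z: "Z ** matrix_inv Z = mat 1" "matrix_inv Z ** Z = mat 1" using minv[OF assms] by auto
  have c1: "mconj Z ** mconj (matrix_inv Z) = mat 1" "mconj (matrix_inv Z) ** mconj Z = mat 1"
    using arg_cong[OF Z(1), of mconj] arg_cong[OF Z(2), of mconj] by (simp_all add: mconj_mult mconj_mat1)
  then have "invertible (mconj Z)" unfolding invertible_def by blast
  then have W: "matrix_inv (mconj Z) ** mconj Z = mat 1" using minv by blast
  have "matrix_inv (mconj Z) = matrix_inv (mconj Z) ** (mconj Z ** mconj (matrix_inv Z))"
    using c1 by simp
  also have "\<dots> = mconj (matrix_inv Z)" by (simp add: matrix_mul_assoc W)
  finally show ?thesis .
qed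

lemma pmat_conj:
  assumes "\<forall>i<q. f i (vconj p) = cnj (f i p)"
  shows "pmat q f M (vconj p) = mconj (pmat q f M p)"
  unfolding pmat_def mconj_sum mconj_smat mconj_cmat using assms by simp

lemma real_sum:
  fixes F :: "complex^'p \<Rightarrow> complex^'f^'o \<Rightarrow> complex^'b^'a"
  assumes cc: "mset (map (\<lambda>l. (P l, Y l)) [0..<N]) = mset (map (\<lambda>l. (vconj (P l), mconj (Y l))) [0..<N])"
    and F: "\<forall>l<N. F (vconj (P l)) (mconj (Y l)) = mconj (F (P l) (Y l))"
  shows "mconj (\<Sum>l<N. F (P l) (Y l)) = (\<Sum>l<N. F (P l) (Y l))"
proof -
  have gen: "(\<Sum>l<N. g l) = sum_mset (mset (map g [0..<N]))" for g :: "nat \<Rightarrow> complex^'b^'a"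
    by (simp add: sum_unfold_sum_mset atLeast0LessThan)
  have "(\<Sum>l<N. F (P l) (Y l)) = sum_mset (image_mset (case_prod F) (mset (map (\<lambda>l. (P l, Y l)) [0..<N])))"
    unfolding gen by (simp add: multiset.map_comp o_def)
  also have "\<dots> = sum_mset (image_mset (case_prod F) (mset (map (\<lambda>l. (vconj (P l), mconj (Y l))) [0..<N])))"
    by (simp only: cc)
  also have "\<dots> = (\<Sum>l<N. F (vconj (P l)) (mconj (Y l)))"
    unfolding gen by (simp add: multiset.map_comp o_def)
  also have "\<dots> = (\<Sum>l<N. mconj (F (P l) (Y l)))" using F by simp
  finally show ?thesis by (simp add: mconj_sum)
qed

lemma real_G:
  assumes "mconj S = S"
  shows "cmat (remat (smat (2 / of_nat N) S)) = smat (2 / of_nat N) S"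
proof -
  have "S$a$b \<in> \<real>" for a b using assms
    by (simp add: Reals_cnj_iff vec_eq_iff mconj_def)
  then show ?thesis
    by (simp add: vec_eq_iff cmat_def remat_def smat_def)
qed

lemma combine:
  "(1/real N) * (\<Sum>l<N. 2 * inner H (remat (U l))) = inner H (remat (smat (2 / of_nat N) (\<Sum>l<N. U l)))"
proof -
  have "remat (smat (2 / of_nat N) (\<Sum>l<N. U l)) = (2 / real N) *\<^sub>R (\<Sum>l<N. remat (U l))"
    by (simp add: vec_eq_iff remat_def smat_def Re_sum sum_distrib_left)
  then show ?thesis
    by (simp add: inner_sum_right sum_distrib_left)
qed

lemma smat_diff: "smat c (U - V) = smat c U - smat c V"
  by (simp add: vec_eq_iff smat_def algebra_simps)

lemma d_affine:
  "((\<lambda>X::real^'n^'m. Z0 + smat a (cmat X - cmat X0)) has_derivative (\<lambda>H. smat a (cmat H))) (at X0)"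
proof -
  have "((\<lambda>X::real^'n^'m. Z0 + (smat a (cmat X) - smat a (cmat X0))) has_derivative (\<lambda>H. 0 + (smat a (cmat H) - 0))) (at X0)"
    by (intro has_derivative_add has_derivative_diff has_derivative_const bounded_linear.has_derivative[OF bl_smat_cmat] has_derivative_ident)
  then show ?thesis by (simp add: smat_diff)
qed

lemma dA:
  assumes i: "i < qA" and inv: "invertible (pmat qA \<alpha> A p)"
  shows "((\<lambda>X. Y' - yhat qA \<alpha> (A(i:=X)) qB \<beta> B qC \<gamma> C p) has_derivative
     (\<lambda>H. pmat qC \<gamma> C p ** (matrix_inv (pmat qA \<alpha> A p) ** smat (\<alpha> i p) (cmat H) ** matrix_inv (pmat qA \<alpha> A p)) ** pmat qB \<beta> B p)) (at (A i))"
proof -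
  let ?Z = "\<lambda>X. pmat qA \<alpha> A p + smat (\<alpha> i p) (cmat X - cmat (A i))"
  have eq: "yhat qA \<alpha> (A(i:=X)) qB \<beta> B qC \<gamma> C p = pmat qC \<gamma> C p ** (matrix_inv (?Z X) ** pmat qB \<beta> B p)" for X
    unfolding yhat_def xhat_def pmat_upd[OF i] ..
  have Z0: "?Z (A i) = pmat qA \<alpha> A p" by (simp add: vec_eq_iff smat_def)
  have d1: "((\<lambda>X. matrix_inv (?Z X)) has_derivative
      (\<lambda>H. - (matrix_inv (pmat qA \<alpha> A p) ** smat (\<alpha> i p) (cmat H) ** matrix_inv (pmat qA \<alpha> A p)))) (at (A i))"
  proof -
    have "(matrix_inv has_derivative
      (\<lambda>H. - (matrix_inv (pmat qA \<alpha> A p) ** H ** matrix_inv (pmat qA \<alpha> A p)))) (at (?Z (A i)))"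
      using MI[OF inv] unfolding Z0 .
    from has_derivative_compose[OF d_affine this] show ?thesis .
  qed
  have bl: "bounded_linear (\<lambda>W. pmat qC \<gamma> C p ** (W ** pmat qB \<beta> B p))"
    by (rule bounded_linear_compose[OF bl_left bl_right])
  have "((\<lambda>X. Y' - pmat qC \<gamma> C p ** (matrix_inv (?Z X) ** pmat qB \<beta> B p)) has_derivative
     (\<lambda>H. 0 - pmat qC \<gamma> C p ** (- (matrix_inv (pmat qA \<alpha> A p) ** smat (\<alpha> i p) (cmat H) ** matrix_inv (pmat qA \<alpha> A p)) ** pmat qB \<beta> B p))) (at (A i))"
    by (intro has_derivative_diff has_derivative_const bounded_linear.has_derivative[OF bl] d1)
  then show ?thesis unfolding eq by (simp add: mm_neg_l mm_neg_r matrix_mul_assoc)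
qed

lemma dB:
  assumes j: "j < qB"
  shows "((\<lambda>X. Y' - yhat qA \<alpha> A qB \<beta> (B(j:=X)) qC \<gamma> C p) has_derivative
     (\<lambda>H. - (pmat qC \<gamma> C p ** (matrix_inv (pmat qA \<alpha> A p) ** smat (\<beta> j p) (cmat H))))) (at (B j))"
proof -
  have eq: "yhat qA \<alpha> A qB \<beta> (B(j:=X)) qC \<gamma> C p = pmat qC \<gamma> C p ** (matrix_inv (pmat qA \<alpha> A p) **
         (pmat qB \<beta> B p + smat (\<beta> j p) (cmat X - cmat (B j))))" for X
    unfolding yhat_def xhat_def pmat_upd[OF j] ..
  have bl: "bounded_linear (\<lambda>W. pmat qC \<gamma> C p ** (matrix_inv (pmat qA \<alpha> A p) ** W))"
    by (rule bounded_linear_compose[OF bl_left bl_left])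
  have "((\<lambda>X. Y' - pmat qC \<gamma> C p ** (matrix_inv (pmat qA \<alpha> A p) **
         (pmat qB \<beta> B p + smat (\<beta> j p) (cmat X - cmat (B j))))) has_derivative
     (\<lambda>H. 0 - (pmat qC \<gamma> C p ** (matrix_inv (pmat qA \<alpha> A p) ** smat (\<beta> j p) (cmat H))))) (at (B j))"
    by (intro has_derivative_diff has_derivative_const bounded_linear.has_derivative[OF bl] d_affine)
  then show ?thesis unfolding eq by simp
qed

lemma dC:
  assumes k: "k < qC"
  shows "((\<lambda>X. Y' - yhat qA \<alpha> A qB \<beta> B qC \<gamma> (C(k:=X)) p) has_derivative
     (\<lambda>H. - (smat (\<gamma> k p) (cmat H) ** xhat qA \<alpha> A qB \<beta> B p))) (at (C k))"
proof -
  have eq: "yhat qA \<alpha> A qB \<beta> B qC \<gamma> (C(k:=X)) p = (pmat qC \<gamma> C p + smat (\<gamma> k p) (cmat X - cmat (C k))) ** xhat qA \<alpha> A qB \<beta> B p" for X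
    unfolding yhat_def pmat_upd[OF k] ..
  have "((\<lambda>X. Y' - (pmat qC \<gamma> C p + smat (\<gamma> k p) (cmat X - cmat (C k))) ** xhat qA \<alpha> A qB \<beta> B p) has_derivative
     (\<lambda>H. 0 - (smat (\<gamma> k p) (cmat H) ** xhat qA \<alpha> A qB \<beta> B p))) (at (C k))"
    by (intro has_derivative_diff has_derivative_const bounded_linear.has_derivative[OF bl_right] d_affine)
  then show ?thesis unfolding eq by simp
qed

lemma gA:
  "inner E (Cp ** (Zi ** smat a (cmat H) ** Zi) ** Bp) =
   inner H (remat (smat (cnj a) ((cadj Zi ** cadj Cp) ** E ** cadj (Zi ** Bp))))"
proof -
  have "Cp ** (Zi ** smat a (cmat H) ** Zi) ** Bp = (Cp ** Zi) ** (smat a (cmat H) ** (Zi ** Bp))"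
    by (simp add: matrix_mul_assoc)
  then have "inner E (Cp ** (Zi ** smat a (cmat H) ** Zi) ** Bp) = inner (cadj (Cp ** Zi) ** E) (smat a (cmat H) ** (Zi ** Bp))"
    by (simp only: inner_mult_l)
  also have "\<dots> = inner (cadj (Cp ** Zi) ** E ** cadj (Zi ** Bp)) (smat a (cmat H))"
    by (rule inner_mult_r)
  finally have "inner E (Cp ** (Zi ** smat a (cmat H) ** Zi) ** Bp) = inner (cadj (Cp ** Zi) ** E ** cadj (Zi ** Bp)) (smat a (cmat H))" .
  then show ?thesis by (simp add: inner_smat_cmat cadj_mult)
qed

lemma gB:
  "inner E (- (Cp ** (Zi ** smat a (cmat H)))) =
   inner H (remat (smat (cnj a) ((cadj Zi ** cadj Cp) ** (- E))))"
proof -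
  have "inner E (- (Cp ** (Zi ** smat a (cmat H)))) = inner (- E) ((Cp ** Zi) ** smat a (cmat H))"
    by (simp add: matrix_mul_assoc)
  also have "\<dots> = inner (cadj (Cp ** Zi) ** (- E)) (smat a (cmat H))" by (rule inner_mult_l)
  finally show ?thesis by (simp add: inner_smat_cmat cadj_mult)
qed

lemma gC:
  "inner E (- (smat a (cmat H) ** X)) = inner H (remat (smat (cnj a) ((- E) ** cadj X)))"
proof -
  have "inner E (- (smat a (cmat H) ** X)) = inner (- E) (smat a (cmat H) ** X)" by simp
  also have "\<dots> = inner ((- E) ** cadj X) (smat a (cmat H))" by (rule inner_mult_r)
  finally show ?thesis by (simp add: inner_smat_cmat)
qed

theorem corollary1:
  fixes N :: nat
    and P :: "nat \<Rightarrow> complex^'p::finite"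
    and Y :: "nat \<Rightarrow> complex^'f::finite^'o::finite"
    and qA qB qC :: nat
    and \<alpha> \<beta> \<gamma> :: "nat \<Rightarrow> complex^'p \<Rightarrow> complex"
    and A :: "nat \<Rightarrow> real^'r::finite^'r"
    and B :: "nat \<Rightarrow> real^'f^'r"
    and C :: "nat \<Rightarrow> real^'r^'o"
  defines "\<mu> \<equiv> empmeas N P"
  assumes N_pos: "0 < N"
    and conj_closed: "mset (map (\<lambda>l. (P l, Y l)) [0..<N])
                    = mset (map (\<lambda>l. (vconj (P l), mconj (Y l))) [0..<N])"
    and \<alpha>_conj: "\<forall>i<qA. \<forall>l<N. \<alpha> i (vconj (P l)) = cnj (\<alpha> i (P l))"
    and \<beta>_conj: "\<forall>j<qB. \<forall>l<N. \<beta> j (vconj (P l)) = cnj (\<beta> j (P l))"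
    and \<gamma>_conj: "\<forall>k<qC. \<forall>l<N. \<gamma> k (vconj (P l)) = cnj (\<gamma> k (P l))"
    and integrable: "(\<integral>\<^sup>+ p. ((ennreal (\<Sum>j<qB. cmod (\<beta> j p)) * ennreal (\<Sum>k<qC. cmod (\<gamma> k p)))
                          / ennreal (\<Sum>i<qA. cmod (\<alpha> i p))) ^ 2 \<partial>\<mu>) < \<infinity>"
    and R: "inR \<mu> qA \<alpha> A"
  shows
   "(\<forall>i<qA. let G = smat (2 / of_nat N) (\<Sum>l<N. smat (\<alpha> i (vconj (P l)))
                  (xdual qA \<alpha> A qC \<gamma> C (P l) ** (Y l - yhat qA \<alpha> A qB \<beta> B qC \<gamma> C (P l))
                   ** cadj (xhat qA \<alpha> A qB \<beta> B (P l))))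
     in cmat (remat G) = G \<and>
        (GDERIV (\<lambda>X. Jmse N P Y qA \<alpha> (A(i := X)) qB \<beta> B qC \<gamma> C) (A i) :> remat G)) \<and>
    (\<forall>j<qB. let G = smat (2 / of_nat N) (\<Sum>l<N. smat (\<beta> j (vconj (P l)))
                  (xdual qA \<alpha> A qC \<gamma> C (P l) ** (yhat qA \<alpha> A qB \<beta> B qC \<gamma> C (P l) - Y l)))
     in cmat (remat G) = G \<and>
        (GDERIV (\<lambda>X. Jmse N P Y qA \<alpha> A qB \<beta> (B(j := X)) qC \<gamma> C) (B j) :> remat G)) \<and>
    (\<forall>k<qC. let G = smat (2 / of_nat N) (\<Sum>l<N. smat (\<gamma> k (vconj (P l)))
                  ((yhat qA \<alpha> A qB \<beta> B qC \<gamma> C (P l) - Y l) ** cadj (xhat qA \<alpha> A qB \<beta> B (P l))))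
     in cmat (remat G) = G \<and>
        (GDERIV (\<lambda>X. Jmse N P Y qA \<alpha> A qB \<beta> B qC \<gamma> (C(k := X))) (C k) :> remat G))"
proof -
  let ?M = "mset (map P [0..<N])"
  have "P 0 \<in># ?M" using N_pos by simp
  then have Mne: "?M \<noteq> {#}" by (metis empty_iff set_mset_empty)
  have invP: "invertible (pmat qA \<alpha> A (P l))" if "l < N" for l
  proof -
    have "AE p in \<mu>. invertible (pmat qA \<alpha> A p)" using R unfolding inR_def by blast
    then have "\<forall>y\<in>set_mset ?M. invertible (pmat qA \<alpha> A y)"
      unfolding \<mu>_def empmeas_def AE_measure_pmf_iff set_pmf_of_multiset[OF Mne] .
    then show ?thesis using that by simp
  qed
  have cA: "pmat qA \<alpha> A (vconj (P l)) = mconj (pmat qA \<alpha> A (P l))" if "l < N" for l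
    using \<alpha>_conj that by (intro pmat_conj) auto
  have cB: "pmat qB \<beta> B (vconj (P l)) = mconj (pmat qB \<beta> B (P l))" if "l < N" for l
    using \<beta>_conj that by (intro pmat_conj) auto
  have cC: "pmat qC \<gamma> C (vconj (P l)) = mconj (pmat qC \<gamma> C (P l))" if "l < N" for l
    using \<gamma>_conj that by (intro pmat_conj) auto
  have cI: "matrix_inv (pmat qA \<alpha> A (vconj (P l))) = mconj (matrix_inv (pmat qA \<alpha> A (P l)))" if "l < N" for l
    using cA[OF that] mconj_inv[OF invP[OF that]] by simp
  have cx: "xhat qA \<alpha> A qB \<beta> B (vconj (P l)) = mconj (xhat qA \<alpha> A qB \<beta> B (P l))" if "l < N" for l
    unfolding xhat_def using cI[OF that] cB[OF that] by (simp add: mconj_mult)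
  have cy: "yhat qA \<alpha> A qB \<beta> B qC \<gamma> C (vconj (P l)) = mconj (yhat qA \<alpha> A qB \<beta> B qC \<gamma> C (P l))" if "l < N" for l
    unfolding yhat_def using cx[OF that] cC[OF that] by (simp add: mconj_mult)
  have cd: "xdual qA \<alpha> A qC \<gamma> C (vconj (P l)) = mconj (xdual qA \<alpha> A qC \<gamma> C (P l))" if "l < N" for l
    unfolding xdual_def using cI[OF that] cC[OF that] by (simp add: mconj_mult mconj_cadj)

  let ?E = "\<lambda>l. Y l - yhat qA \<alpha> A qB \<beta> B qC \<gamma> C (P l)"
  have partA: "\<forall>i<qA. let G = smat (2 / of_nat N) (\<Sum>l<N. smat (\<alpha> i (vconj (P l)))
                  (xdual qA \<alpha> A qC \<gamma> C (P l) ** (Y l - yhat qA \<alpha> A qB \<beta> B qC \<gamma> C (P l))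
                   ** cadj (xhat qA \<alpha> A qB \<beta> B (P l))))
     in cmat (remat G) = G \<and>
        (GDERIV (\<lambda>X. Jmse N P Y qA \<alpha> (A(i := X)) qB \<beta> B qC \<gamma> C) (A i) :> remat G)"
  proof (intro allI impI, unfold Let_def, intro conjI)
    fix i assume i: "i < qA"
    let ?U = "\<lambda>l. smat (\<alpha> i (vconj (P l)))
                  (xdual qA \<alpha> A qC \<gamma> C (P l) ** (Y l - yhat qA \<alpha> A qB \<beta> B qC \<gamma> C (P l))
                   ** cadj (xhat qA \<alpha> A qB \<beta> B (P l)))"
    have "mconj (\<Sum>l<N. ?U l) = (\<Sum>l<N. ?U l)"
    proof (rule real_sum[where F = "\<lambda>p y. smat (\<alpha> i (vconj p))
                  (xdual qA \<alpha> A qC \<gamma> C p ** (y - yhat qA \<alpha> A qB \<beta> B qC \<gamma> C p)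
                   ** cadj (xhat qA \<alpha> A qB \<beta> B p))", OF conj_closed])
      show "\<forall>l<N. smat (\<alpha> i (vconj (vconj (P l))))
                  (xdual qA \<alpha> A qC \<gamma> C (vconj (P l)) ** (mconj (Y l) - yhat qA \<alpha> A qB \<beta> B qC \<gamma> C (vconj (P l)))
                   ** cadj (xhat qA \<alpha> A qB \<beta> B (vconj (P l)))) = mconj (?U l)"
        using \<alpha>_conj i by (auto simp: cd cx cy mconj_smat mconj_mult mconj_diff mconj_cadj)
    qed
    then show "cmat (remat (smat (2 / of_nat N) (\<Sum>l<N. ?U l))) = smat (2 / of_nat N) (\<Sum>l<N. ?U l)"
      by (rule real_G)
    define dl where "dl l H = pmat qC \<gamma> C (P l) ** (matrix_inv (pmat qA \<alpha> A (P l)) ** smat (\<alpha> i (P l)) (cmat H)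
        ** matrix_inv (pmat qA \<alpha> A (P l))) ** pmat qB \<beta> B (P l)" for l H
    have D: "((\<lambda>X. (1/real N) * (\<Sum>l<N. (frob ((\<lambda>l X. Y l - yhat qA \<alpha> (A(i:=X)) qB \<beta> B qC \<gamma> C (P l)) l X))^2))
       has_derivative (\<lambda>H. (1/real N) * (\<Sum>l<N. 2 * inner ((\<lambda>l X. Y l - yhat qA \<alpha> (A(i:=X)) qB \<beta> B qC \<gamma> C (P l)) l (A i)) (dl l H))))
       (at (A i))"
      by (rule J_deriv) (unfold dl_def, rule dA[OF i invP])
    have D2: "((\<lambda>X. (1/real N) * (\<Sum>l<N. (frob (Y l - yhat qA \<alpha> (A(i:=X)) qB \<beta> B qC \<gamma> C (P l)))^2))
       has_derivative (\<lambda>H. (1/real N) * (\<Sum>l<N. 2 * inner (?E l) (dl l H)))) (at (A i))"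
      using D by (simp only: fun_upd_triv)
    show "GDERIV (\<lambda>X. Jmse N P Y qA \<alpha> (A(i := X)) qB \<beta> B qC \<gamma> C) (A i) :> remat (smat (2 / of_nat N) (\<Sum>l<N. ?U l))"
      unfolding gderiv_def Jmse_def
    proof (rule has_derivative_eq_rhs[OF D2], rule ext)
      fix H
      have "(\<Sum>l<N. 2 * inner (?E l) (dl l H)) = (\<Sum>l<N. 2 * inner H (remat (?U l)))"
      proof (intro sum.cong refl)
        fix l assume "l \<in> {..<N}"
        then have l: "l < N" by simp
        show "2 * inner (?E l) (dl l H) = 2 * inner H (remat (?U l))"
          unfolding dl_def gA xdual_def xhat_def using \<alpha>_conj i l by simp
      qed
      then show "(1/real N) * (\<Sum>l<N. 2 * inner (?E l) (dl l H)) = inner H (remat (smat (2 / of_nat N) (\<Sum>l<N. ?U l)))"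
        by (simp add: combine[symmetric])
    qed
  qed

  have partB: "\<forall>j<qB. let G = smat (2 / of_nat N) (\<Sum>l<N. smat (\<beta> j (vconj (P l)))
                  (xdual qA \<alpha> A qC \<gamma> C (P l) ** (yhat qA \<alpha> A qB \<beta> B qC \<gamma> C (P l) - Y l)))
     in cmat (remat G) = G \<and>
        (GDERIV (\<lambda>X. Jmse N P Y qA \<alpha> A qB \<beta> (B(j := X)) qC \<gamma> C) (B j) :> remat G)"
  proof (intro allI impI, unfold Let_def, intro conjI)
    fix j assume j: "j < qB"
    let ?U = "\<lambda>l. smat (\<beta> j (vconj (P l)))
                  (xdual qA \<alpha> A qC \<gamma> C (P l) ** (yhat qA \<alpha> A qB \<beta> B qC \<gamma> C (P l) - Y l))"
    have "mconj (\<Sum>l<N. ?U l) = (\<Sum>l<N. ?U l)"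
    proof (rule real_sum[where F = "\<lambda>p y. smat (\<beta> j (vconj p))
                  (xdual qA \<alpha> A qC \<gamma> C p ** (yhat qA \<alpha> A qB \<beta> B qC \<gamma> C p - y))", OF conj_closed])
      show "\<forall>l<N. smat (\<beta> j (vconj (vconj (P l))))
                  (xdual qA \<alpha> A qC \<gamma> C (vconj (P l)) ** (yhat qA \<alpha> A qB \<beta> B qC \<gamma> C (vconj (P l)) - mconj (Y l)))
                  = mconj (?U l)"
        using \<beta>_conj j by (auto simp: cd cx cy mconj_smat mconj_mult mconj_diff mconj_cadj)
    qed
    then show "cmat (remat (smat (2 / of_nat N) (\<Sum>l<N. ?U l))) = smat (2 / of_nat N) (\<Sum>l<N. ?U l)"
      by (rule real_G)
    define dl where "dl l H = - (pmat qC \<gamma> C (P l) ** (matrix_inv (pmat qA \<alpha> A (P l)) ** smat (\<beta> j (P l)) (cmat H)))" for l and H :: "real^'f^'r"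
    have D: "((\<lambda>X. (1/real N) * (\<Sum>l<N. (frob ((\<lambda>l X. Y l - yhat qA \<alpha> A qB \<beta> (B(j:=X)) qC \<gamma> C (P l)) l X))^2))
       has_derivative (\<lambda>H. (1/real N) * (\<Sum>l<N. 2 * inner ((\<lambda>l X. Y l - yhat qA \<alpha> A qB \<beta> (B(j:=X)) qC \<gamma> C (P l)) l (B j)) (dl l H))))
       (at (B j))"
      by (rule J_deriv) (unfold dl_def, rule dB[OF j])
    have D2: "((\<lambda>X. (1/real N) * (\<Sum>l<N. (frob (Y l - yhat qA \<alpha> A qB \<beta> (B(j:=X)) qC \<gamma> C (P l)))^2))
       has_derivative (\<lambda>H. (1/real N) * (\<Sum>l<N. 2 * inner (?E l) (dl l H)))) (at (B j))"
      using D by (simp only: fun_upd_triv)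
    show "GDERIV (\<lambda>X. Jmse N P Y qA \<alpha> A qB \<beta> (B(j := X)) qC \<gamma> C) (B j) :> remat (smat (2 / of_nat N) (\<Sum>l<N. ?U l))"
      unfolding gderiv_def Jmse_def
    proof (rule has_derivative_eq_rhs[OF D2], rule ext)
      fix H
      have "(\<Sum>l<N. 2 * inner (?E l) (dl l H)) = (\<Sum>l<N. 2 * inner H (remat (?U l)))"
      proof (intro sum.cong refl)
        fix l assume "l \<in> {..<N}"
        then have l: "l < N" by simp
        show "2 * inner (?E l) (dl l H) = 2 * inner H (remat (?U l))"
          unfolding dl_def gB xdual_def using \<beta>_conj j l by simp
      qed
      then show "(1/real N) * (\<Sum>l<N. 2 * inner (?E l) (dl l H)) = inner H (remat (smat (2 / of_nat N) (\<Sum>l<N. ?U l)))"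
        by (simp add: combine[symmetric])
    qed
  qed
  have partC: "\<forall>k<qC. let G = smat (2 / of_nat N) (\<Sum>l<N. smat (\<gamma> k (vconj (P l)))
                  ((yhat qA \<alpha> A qB \<beta> B qC \<gamma> C (P l) - Y l) ** cadj (xhat qA \<alpha> A qB \<beta> B (P l))))
     in cmat (remat G) = G \<and>
        (GDERIV (\<lambda>X. Jmse N P Y qA \<alpha> A qB \<beta> B qC \<gamma> (C(k := X))) (C k) :> remat G)"
  proof (intro allI impI, unfold Let_def, intro conjI)
    fix k assume k: "k < qC"
    let ?U = "\<lambda>l. smat (\<gamma> k (vconj (P l)))
                  ((yhat qA \<alpha> A qB \<beta> B qC \<gamma> C (P l) - Y l) ** cadj (xhat qA \<alpha> A qB \<beta> B (P l)))"
    have "mconj (\<Sum>l<N. ?U l) = (\<Sum>l<N. ?U l)"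
    proof (rule real_sum[where F = "\<lambda>p y. smat (\<gamma> k (vconj p))
                  ((yhat qA \<alpha> A qB \<beta> B qC \<gamma> C p - y) ** cadj (xhat qA \<alpha> A qB \<beta> B p))", OF conj_closed])
      show "\<forall>l<N. smat (\<gamma> k (vconj (vconj (P l))))
                  ((yhat qA \<alpha> A qB \<beta> B qC \<gamma> C (vconj (P l)) - mconj (Y l)) ** cadj (xhat qA \<alpha> A qB \<beta> B (vconj (P l))))
                  = mconj (?U l)"
        using \<gamma>_conj k by (auto simp: cd cx cy mconj_smat mconj_mult mconj_diff mconj_cadj)
    qed
    then show "cmat (remat (smat (2 / of_nat N) (\<Sum>l<N. ?U l))) = smat (2 / of_nat N) (\<Sum>l<N. ?U l)"
      by (rule real_G)
    define dl where "dl l H = - (smat (\<gamma> k (P l)) (cmat H) ** xhat qA \<alpha> A qB \<beta> B (P l))" for l and H :: "real^'r^'o"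
    have D: "((\<lambda>X. (1/real N) * (\<Sum>l<N. (frob ((\<lambda>l X. Y l - yhat qA \<alpha> A qB \<beta> B qC \<gamma> (C(k:=X)) (P l)) l X))^2))
       has_derivative (\<lambda>H. (1/real N) * (\<Sum>l<N. 2 * inner ((\<lambda>l X. Y l - yhat qA \<alpha> A qB \<beta> B qC \<gamma> (C(k:=X)) (P l)) l (C k)) (dl l H))))
       (at (C k))"
      by (rule J_deriv) (unfold dl_def, rule dC[OF k])
    have D2: "((\<lambda>X. (1/real N) * (\<Sum>l<N. (frob (Y l - yhat qA \<alpha> A qB \<beta> B qC \<gamma> (C(k:=X)) (P l)))^2))
       has_derivative (\<lambda>H. (1/real N) * (\<Sum>l<N. 2 * inner (?E l) (dl l H)))) (at (C k))"
      using D by (simp only: fun_upd_triv)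
    show "GDERIV (\<lambda>X. Jmse N P Y qA \<alpha> A qB \<beta> B qC \<gamma> (C(k := X))) (C k) :> remat (smat (2 / of_nat N) (\<Sum>l<N. ?U l))"
      unfolding gderiv_def Jmse_def
    proof (rule has_derivative_eq_rhs[OF D2], rule ext)
      fix H
      have "(\<Sum>l<N. 2 * inner (?E l) (dl l H)) = (\<Sum>l<N. 2 * inner H (remat (?U l)))"
      proof (intro sum.cong refl)
        fix l assume "l \<in> {..<N}"
        then have l: "l < N" by simp
        show "2 * inner (?E l) (dl l H) = 2 * inner H (remat (?U l))"
          unfolding dl_def gC using \<gamma>_conj k l by simp
      qed
      then show "(1/real N) * (\<Sum>l<N. 2 * inner (?E l) (dl l H)) = inner H (remat (smat (2 / of_nat N) (\<Sum>l<N. ?U l)))"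
        by (simp add: combine[symmetric])
    qed
  qed
  show ?thesis using partA partB partC by blast
qed

end
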